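(* Let $1<\beta\le2$ and let $x\in(0,1)$ be non-simple. (1) For every $y\in(0,1)$ with $y<x$, writing $N=N(x,y)$, we have $x-y\ge \tau_\beta^N(x)/\beta^N$. (2) For every $z\in(0,1)$ with $z>x$, writing $N=N(x,z)$, we have $z-x\ge (1-\tau_\beta^N(x))/\beta^N$.
   Context: Fix $1<\beta\le 2$. The beta-map is $\tau_\beta(x)=\beta x-[\beta x]$ on $[0,1]$, where $[y]$ is the integer part of $y$. The digits are $g_n(x)=[\beta\,\tau_\beta^{n-1}(x)]\in\{0,1\}$ for $n\ge1$ and $x\in[0,1)$, so that $x=\sum_{n\ge1}g_n(x)\beta^{-n}$. A number $x\in[0,1]$ is called simple if $\tau_\beta^{n}(x)=1/\beta$ for some $n\ge0$. For $x\ne y$ in $[0,1]$, the orbit separation time is $N(x,y)=\min\{i\ge1:\ g_i(x)\neq g_i(y)\}$. *)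

theory Defs
  imports Complex_Main
begin

definition beta_map :: "real \<Rightarrow> real \<Rightarrow> real" where
  "beta_map \<beta> x = \<beta> * x - of_int \<lfloor>\<beta> * x\<rfloor>"

definition beta_digit :: "real \<Rightarrow> nat \<Rightarrow> real \<Rightarrow> int" where
  "beta_digit \<beta> n x = \<lfloor>\<beta> * (beta_map \<beta> ^^ (n - 1)) x\<rfloor>"

definition beta_simple :: "real \<Rightarrow> real \<Rightarrow> bool" where
  "beta_simple \<beta> x \<longleftrightarrow> (\<exists>n::nat. (beta_map \<beta> ^^ n) x = 1 / \<beta>)"

definition sep_time :: "real \<Rightarrow> real \<Rightarrow> real \<Rightarrow> nat" where
  "sep_time \<beta> x y = (LEAST i. 1 \<le> i \<and> beta_digit \<beta> i x \<noteq> beta_digit \<beta> i y)"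

end

theory Submission
  imports Defs
begin

lemma T_Suc: "(beta_map b ^^ Suc n) w = b * (beta_map b ^^ n) w - of_int \<lfloor>b * (beta_map b ^^ n) w\<rfloor>"
  by (simp add: beta_map_def)

lemma T_range: "0 \<le> w \<Longrightarrow> w < 1 \<Longrightarrow> 0 \<le> (beta_map b ^^ n) w \<and> (beta_map b ^^ n) w < 1"
proof (induction n)
  case 0 then show ?case by simp
next
  case (Suc n) then show ?case unfolding T_Suc by linarith
qed

lemma digit_Suc: "beta_digit b (Suc n) w = \<lfloor>b * (beta_map b ^^ n) w\<rfloor>"
  by (simp add: beta_digit_def)

lemma diff_eq:
  assumes "b > 0" "\<forall>i. 1 \<le> i \<and> i \<le> n \<longrightarrow> beta_digit b i x = beta_digit b i y"
  shows "x - y = ((beta_map b ^^ n) x - (beta_map b ^^ n) y) / b ^ n"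
  using assms(2)
proof (induction n)
  case 0 then show ?case by simp
next
  case (Suc n)
  have ih: "x - y = ((beta_map b ^^ n) x - (beta_map b ^^ n) y) / b ^ n" using Suc by auto
  have "beta_digit b (Suc n) x = beta_digit b (Suc n) y" using Suc.prems by auto
  then have "(beta_map b ^^ Suc n) x - (beta_map b ^^ Suc n) y = b * ((beta_map b ^^ n) x - (beta_map b ^^ n) y)"
    unfolding T_Suc digit_Suc by (simp add: algebra_simps)
  then show ?case using ih assms(1) by simp
qed

lemma sep_props:
  assumes b: "b > 1" and xy: "x \<noteq> y" and r: "0 \<le> x" "x < 1" "0 \<le> y" "y < 1"
  shows "1 \<le> sep_time b x y \<and> beta_digit b (sep_time b x y) x \<noteq> beta_digit b (sep_time b x y) y
     \<and> x - y = ((beta_map b ^^ (sep_time b x y - 1)) x - (beta_map b ^^ (sep_time b x y - 1)) y) / b ^ (sep_time b x y - 1)"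
proof -
  have ex: "\<exists>i. 1 \<le> i \<and> beta_digit b i x \<noteq> beta_digit b i y"
  proof (rule ccontr)
    assume "\<not> ?thesis"
    then have all: "\<forall>i. 1 \<le> i \<and> i \<le> n \<longrightarrow> beta_digit b i x = beta_digit b i y" for n by auto
    obtain n where n: "1 / \<bar>x - y\<bar> < b ^ n" using real_arch_pow[OF b] by blast
    have e: "x - y = ((beta_map b ^^ n) x - (beta_map b ^^ n) y) / b ^ n"
      using diff_eq[OF _ all] b by simp
    have "\<bar>(beta_map b ^^ n) x - (beta_map b ^^ n) y\<bar> < 1"
      using T_range[OF r(1,2), where b=b and n=n] T_range[OF r(3,4), where b=b and n=n] by linarith
    moreover have bp: "b ^ n > 0" using b by simp
    ultimately have lt1: "\<bar>x - y\<bar> < 1 / b ^ n" using e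
      by (simp add: abs_divide divide_strict_right_mono)
    have pos: "\<bar>x - y\<bar> > 0" using xy by simp
    have "b ^ n * \<bar>x - y\<bar> < 1" using lt1 bp by (simp add: less_divide_eq mult.commute)
    then have "1 / \<bar>x - y\<bar> > b ^ n" using pos by (simp add: less_divide_eq)
    then show False using n by simp
  qed
  define N where "N = sep_time b x y"
  have N1: "1 \<le> N \<and> beta_digit b N x \<noteq> beta_digit b N y"
    unfolding N_def sep_time_def by (rule LeastI_ex[OF ex])
  have lt: "\<forall>i. 1 \<le> i \<and> i \<le> N - 1 \<longrightarrow> beta_digit b i x = beta_digit b i y"
  proof (intro allI impI)
    fix i assume "1 \<le> i \<and> i \<le> N - 1"
    then have "i < N" using N1 by auto
    then show "beta_digit b i x = beta_digit b i y" using \<open>1 \<le> i \<and> i \<le> N - 1\<close>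
      unfolding N_def sep_time_def using not_less_Least by blast
  qed
  show ?thesis using N1 diff_eq[OF _ lt] b unfolding N_def by simp
qed

theorem lemma2:
  fixes \<beta> x :: real
  assumes "1 < \<beta>" and "\<beta> \<le> 2"
    and "0 < x" and "x < 1"
    and "\<not> beta_simple \<beta> x"
  shows "(\<forall>y. 0 < y \<and> y < 1 \<and> y < x \<longrightarrow>
            x - y \<ge> (beta_map \<beta> ^^ sep_time \<beta> x y) x / \<beta> ^ sep_time \<beta> x y)
       \<and> (\<forall>z. 0 < z \<and> z < 1 \<and> z > x \<longrightarrow>
            z - x \<ge> (1 - (beta_map \<beta> ^^ sep_time \<beta> x z) x) / \<beta> ^ sep_time \<beta> x z)"
proof (intro conjI allI impI)
  fix y assume y: "0 < y \<and> y < 1 \<and> y < x"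
  define N where "N = sep_time \<beta> x y"
  have "1 \<le> N" using sep_props[of \<beta> x y] assms y unfolding N_def by auto
  then obtain m where m: "N = Suc m" using Suc_pred' by (metis not_one_le_zero not0_implies_Suc)
  have P: "beta_digit \<beta> N x \<noteq> beta_digit \<beta> N y"
     "x - y = ((beta_map \<beta> ^^ m) x - (beta_map \<beta> ^^ m) y) / \<beta> ^ m"
    using sep_props[of \<beta> x y] assms y m unfolding N_def by auto
  define a where "a = (beta_map \<beta> ^^ m) x"
  define c where "c = (beta_map \<beta> ^^ m) y"
  have bm: "\<beta> ^ m > 0" using assms by simp
  have "a - c > 0"
  proof -
    have "x - y > 0" using y by simp
    then have "(a - c) / \<beta> ^ m > 0" using P(2) unfolding a_def c_def by simp
    then show ?thesis using bm assms(1) by (simp add: zero_less_divide_iff)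
  qed
  then have "\<beta> * c \<le> \<beta> * a" using assms by simp
  then have f1: "\<lfloor>\<beta> * c\<rfloor> \<le> \<lfloor>\<beta> * a\<rfloor>" by (rule floor_mono)
  have f2: "\<lfloor>\<beta> * c\<rfloor> \<noteq> \<lfloor>\<beta> * a\<rfloor>" using P(1) unfolding m digit_Suc a_def c_def by simp
  have fl: "\<beta> * c < of_int \<lfloor>\<beta> * a\<rfloor>"
  proof -
    have i: "\<lfloor>\<beta> * c\<rfloor> + 1 \<le> \<lfloor>\<beta> * a\<rfloor>" using f1 f2 by simp
    have "\<beta> * c < of_int \<lfloor>\<beta> * c\<rfloor> + 1" by (rule real_of_int_floor_add_one_gt)
    also have "\<dots> \<le> of_int \<lfloor>\<beta> * a\<rfloor>" using i by (metis of_int_1 of_int_add of_int_le_iff)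
    finally show ?thesis .
  qed
  have TN: "(beta_map \<beta> ^^ N) x = \<beta> * a - of_int \<lfloor>\<beta> * a\<rfloor>" unfolding m T_Suc a_def ..
  have "(beta_map \<beta> ^^ N) x / \<beta> ^ N \<le> \<beta> * (a - c) / \<beta> ^ N"
    using TN fl assms by (intro divide_right_mono) (auto simp: algebra_simps)
  also have "\<beta> * (a - c) / \<beta> ^ N = x - y" using P(2) assms unfolding m a_def c_def by simp
  finally show "x - y \<ge> (beta_map \<beta> ^^ sep_time \<beta> x y) x / \<beta> ^ sep_time \<beta> x y" unfolding N_def .
next
  fix z assume z: "0 < z \<and> z < 1 \<and> z > x"
  define N where "N = sep_time \<beta> x z"
  have "1 \<le> N" using sep_props[of \<beta> x z] assms z unfolding N_def by auto
  then obtain m where m: "N = Suc m" using Suc_pred' by (metis not_one_le_zero not0_implies_Suc)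
  have P: "beta_digit \<beta> N x \<noteq> beta_digit \<beta> N z"
     "x - z = ((beta_map \<beta> ^^ m) x - (beta_map \<beta> ^^ m) z) / \<beta> ^ m"
    using sep_props[of \<beta> x z] assms z m unfolding N_def by auto
  define a where "a = (beta_map \<beta> ^^ m) x"
  define c where "c = (beta_map \<beta> ^^ m) z"
  have bm: "\<beta> ^ m > 0" using assms by simp
  have "c - a > 0"
  proof -
    have "x - z < 0" using z by simp
    then have "(a - c) / \<beta> ^ m < 0" using P(2) unfolding a_def c_def by simp
    then show ?thesis using bm assms(1) by (simp add: divide_less_0_iff)
  qed
  then have "\<beta> * a \<le> \<beta> * c" using assms by simp
  then have "\<lfloor>\<beta> * a\<rfloor> \<le> \<lfloor>\<beta> * c\<rfloor>" by (rule floor_mono)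
  moreover have "\<lfloor>\<beta> * c\<rfloor> \<noteq> \<lfloor>\<beta> * a\<rfloor>" using P(1) unfolding m digit_Suc a_def c_def by simp
  ultimately have "\<lfloor>\<beta> * a\<rfloor> + 1 \<le> \<lfloor>\<beta> * c\<rfloor>" by simp
  then have fl: "of_int \<lfloor>\<beta> * a\<rfloor> + 1 \<le> \<beta> * c"
    by (metis le_floor_iff of_int_1 of_int_add)
  have TN: "(beta_map \<beta> ^^ N) x = \<beta> * a - of_int \<lfloor>\<beta> * a\<rfloor>" unfolding m T_Suc a_def ..
  have "(1 - (beta_map \<beta> ^^ N) x) / \<beta> ^ N \<le> \<beta> * (c - a) / \<beta> ^ N"
    using TN fl assms by (intro divide_right_mono) (auto simp: algebra_simps)
  also have "\<beta> * (c - a) / \<beta> ^ N = z - x"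
  proof -
    have "z - x = -(x - z)" by simp
    also have "\<dots> = (c - a) / \<beta> ^ m" using P(2) unfolding a_def c_def by (simp add: minus_divide_left)
    finally have "z - x = (c - a) / \<beta> ^ m" .
    then show ?thesis using assms(1) unfolding m by simp
  qed
  finally show "z - x \<ge> (1 - (beta_map \<beta> ^^ sep_time \<beta> x z) x) / \<beta> ^ sep_time \<beta> x z" unfolding N_def .
qed

end
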